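(* Let $\mathbf{A}\in\mathbb{R}^{m\times n}$ and $\mathbf{c}\in\mathbb{R}^m$ be such that $\|\mathbf{A}^\top\mathbf{c}\|_2^2$ is an integer. If $\mathbf{A}^\top\mathbf{c}\neq\mathbf{0}$, then $$\|\boldsymbol{\Pi}_{\mathbf{A}}\mathbf{c}\|_2^2\ \ge\ \frac{1}{\sigma_{\max}^2(\mathbf{A})}=\frac{1}{\lambda_{\max}(\mathbf{A}^\top\mathbf{A})}.$$
   Context: $\boldsymbol{\Pi}_{\mathbf{A}}=\mathbf{A}(\mathbf{A}^\top\mathbf{A})^{\dagger}\mathbf{A}^\top$ is the orthogonal projection onto the image of $\mathbf{A}$ ($\dagger$ = Moore–Penrose pseudoinverse); $\sigma_{\max}(\mathbf{A})$ is the largest singular value of $\mathbf{A}$ and $\lambda_{\max}$ the largest eigenvalue. *)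

theory Defs
  imports "HOL-Analysis.Analysis"
begin

definition is_pinv :: "real^'n^'m \<Rightarrow> real^'m^'n \<Rightarrow> bool" where
  "is_pinv M X \<longleftrightarrow> M ** X ** M = M \<and> X ** M ** X = X \<and>
     transpose (M ** X) = M ** X \<and> transpose (X ** M) = X ** M"

definition pinv :: "real^'n^'m \<Rightarrow> real^'m^'n" where
  "pinv M = (THE X. is_pinv M X)"

definition proj_img :: "real^'n^'m \<Rightarrow> real^'m^'m" where
  "proj_img A = A ** pinv (transpose A ** A) ** transpose A"

definition eigenvalues :: "real^'n^'n \<Rightarrow> real set" where
  "eigenvalues M = {\<mu>. \<exists>v. v \<noteq> 0 \<and> M *v v = \<mu> *\<^sub>R v}"

definition lambda_max :: "real^'n^'n \<Rightarrow> real" where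
  "lambda_max M = Max (eigenvalues M)"

definition singular_values :: "real^'n^'m \<Rightarrow> real set" where
  "singular_values A = sqrt ` eigenvalues (transpose A ** A)"

definition sigma_max :: "real^'n^'m \<Rightarrow> real" where
  "sigma_max A = Max (singular_values A)"

end

theory Submission
  imports Defs
begin

lemma adj_dot: "(transpose (A::real^'n^'m) *v u) \<bullet> v = u \<bullet> (A *v v)"
  by (simp add: dot_lmul_matrix)

lemma pinv_unique:
  fixes M :: "real^'n^'m"
  assumes X: "is_pinv M X" and Z: "is_pinv M Z"
  shows "X = Z"
proof -
  note a = matrix_mul_assoc
  have X1: "M ** X ** M = M" "X ** M ** X = X" "transpose (M ** X) = M ** X" "transpose (X ** M) = X ** M"
    using X unfolding is_pinv_def by auto
  have Z1: "M ** Z ** M = M" "Z ** M ** Z = Z" "transpose (M ** Z) = M ** Z" "transpose (Z ** M) = Z ** M"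
    using Z unfolding is_pinv_def by auto
  have "Z ** M = (Z ** M) ** (X ** M)" by (metis X1(1) a)
  also have "\<dots> = transpose (Z ** M) ** transpose (X ** M)" using X1 Z1 by simp
  also have "\<dots> = transpose ((X ** M) ** (Z ** M))" by (simp add: matrix_transpose_mul)
  also have "(X ** M) ** (Z ** M) = X ** M" by (metis Z1(1) a)
  finally have ZM: "Z ** M = X ** M" using X1 by simp
  have "M ** X = (M ** Z) ** (M ** X)" by (metis Z1(1) a)
  also have "\<dots> = transpose (M ** Z) ** transpose (M ** X)" using X1 Z1 by simp
  also have "\<dots> = transpose ((M ** X) ** (M ** Z))" by (simp add: matrix_transpose_mul)
  also have "(M ** X) ** (M ** Z) = M ** Z" by (metis X1(1) a)
  finally have MX: "M ** X = M ** Z" using Z1 by simp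
  have "X = X ** (M ** X)" by (metis X1(2) a)
  also have "\<dots> = X ** M ** Z" using MX by (simp add: a)
  also have "\<dots> = Z ** M ** Z" using ZM by simp
  also have "\<dots> = Z" using Z1(2) .
  finally show ?thesis .
qed

lemma sym_dot:
  fixes M :: "real^'n^'n"
  assumes "transpose M = M"
  shows "(M *v u) \<bullet> v = u \<bullet> (M *v v)"
  using adj_dot[of M u v] assms by simp

lemma sym_by_dot:
  fixes N :: "real^'n^'n"
  assumes "\<And>x y. (N *v x) \<bullet> y = x \<bullet> (N *v y)"
  shows "transpose N = N"
proof -
  have "transpose N *v x = N *v x" for x
  proof -
    have "\<And>y. (transpose N *v x - N *v x) \<bullet> y = 0"
      using adj_dot[of N x] assms by (simp add: inner_diff_left)
    then show ?thesis by (metis inner_eq_zero_iff eq_iff_diff_eq_0)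
  qed
  then show ?thesis by (simp add: matrix_eq)
qed

lemma pinv_exists:
  fixes M :: "real^'n^'n"
  assumes sym: "transpose M = M"
  shows "\<exists>X. is_pinv M X \<and> (\<forall>b. (\<forall>k. M *v k = 0 \<longrightarrow> b \<bullet> k = 0) \<longrightarrow> M *v (X *v b) = b)"
proof -
  define R where "R = span (range ((*v) M))"
  have subR: "subspace R" unfolding R_def by (rule subspace_span)
  obtain B where BR: "B \<subseteq> R" and orth: "pairwise orthogonal B"
    and nB: "\<And>x. x \<in> B \<Longrightarrow> norm x = 1" and indB: "independent B" and spB: "span B = R"
    using orthonormal_basis_subspace[OF subR] by blast
  have finB: "finite B" using indB independent_imp_finite by blast
  define P :: "real^'n^'n" where "P = (\<chi> i j. \<Sum>b\<in>B. b$i * b$j)"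
  define Q :: "real^'n^'n" where "Q = mat 1 - P"
  have Pv: "P *v x = (\<Sum>b\<in>B. (b \<bullet> x) *\<^sub>R b)" for x
    unfolding P_def
    by (simp add: vec_eq_iff matrix_vector_mult_def inner_vec_def sum_component
        sum_distrib_left sum_distrib_right algebra_simps sum.swap[of _ B])
  have dotP: "b' \<bullet> (P *v x) = b' \<bullet> x" if "b' \<in> B" for b' x
  proof -
    have "b' \<bullet> (P *v x) = (\<Sum>b\<in>B. (b \<bullet> x) * (b' \<bullet> b))"
      by (simp add: Pv inner_sum_right)
    also have "\<dots> = (\<Sum>b\<in>B. if b = b' then b' \<bullet> x else 0)"
    proof (rule sum.cong)
      fix b assume "b \<in> B"
      show "(b \<bullet> x) * (b' \<bullet> b) = (if b = b' then b' \<bullet> x else 0)"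
      proof (cases "b = b'")
        case True
        then have "b' \<bullet> b = 1" using nB[OF that] by (simp add: dot_square_norm)
        then show ?thesis using True by simp
      next
        case False
        then have "b' \<bullet> b = 0" using orth \<open>b \<in> B\<close> that
          by (metis orthogonal_def pairwise_def)
        then show ?thesis using False by simp
      qed
    qed simp
    also have "\<dots> = b' \<bullet> x" using finB that by (simp add: sum.delta')
    finally show ?thesis .
  qed
  have Qv: "Q *v x = x - P *v x" for x
    unfolding Q_def by (simp add: matrix_vector_mult_diff_rdistrib)
  have QorthR: "(Q *v x) \<bullet> r = 0" if "r \<in> R" for x r
  proof -
    have "orthogonal (Q *v x) r"
    proof (rule orthogonal_to_span[of r B])
      show "r \<in> span B" using that spB by simp
      fix y assume "y \<in> B"
      then have "y \<bullet> (Q *v x) = 0" using dotP by (simp add: Qv inner_diff_right)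
      then show "orthogonal (Q *v x) y" by (simp add: orthogonal_def inner_commute)
    qed
    then show ?thesis by (simp add: orthogonal_def)
  qed
  have PR: "P *v x \<in> R" for x
    unfolding Pv spB[symmetric]
    by (intro span_sum span_mul span_base) simp
  have MR: "M *v x \<in> R" for x unfolding R_def by (intro span_base) simp
  have PfixR: "P *v r = r" if "r \<in> R" for r
  proof -
    have "r - P *v r \<in> R" using that PR subR by (simp add: subspace_diff)
    then have "(Q *v r) \<bullet> (r - P *v r) = 0" using QorthR by blast
    then show ?thesis by (simp add: Qv)
  qed
  have a: "M *v (Q *v x) = 0" for x
  proof -
    have "(M *v (Q *v x)) \<bullet> (M *v (Q *v x)) = (Q *v x) \<bullet> (M *v (M *v (Q *v x)))"
      using sym_dot[OF sym] by blast
    also have "\<dots> = 0" using QorthR MR by blast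
    finally show ?thesis by simp
  qed
  have b: "Q *v (M *v x) = 0" for x using PfixR[OF MR] by (simp add: Qv)
  have c: "Q *v (Q *v x) = Q *v x" for x
  proof -
    have "\<And>b. b \<in> B \<Longrightarrow> b \<bullet> (Q *v x) = 0"
      using QorthR BR by (metis inner_commute subsetD)
    then have "P *v (Q *v x) = 0" unfolding Pv by simp
    then show ?thesis by (simp add: Qv)
  qed
  have Qsym: "(Q *v x) \<bullet> y = x \<bullet> (Q *v y)" for x y
    by (simp add: Qv Pv inner_diff_left inner_diff_right inner_sum_left inner_sum_right mult.commute)
      (rule sum.cong, simp_all add: inner_commute)
  have d: "x = 0" if "(M + Q) *v x = 0" for x
  proof -
    have e: "M *v x = - (Q *v x)" using that
      by (simp add: matrix_vector_mult_add_rdistrib eq_neg_iff_add_eq_0)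
    have "(M *v x) \<bullet> (M *v x) = - ((Q *v x) \<bullet> (M *v x))"
      by (subst (1) e) simp
    also have "\<dots> = 0" using QorthR MR by simp
    finally have Mx: "M *v x = 0" by simp
    then have "Q *v x = 0" using e by simp
    then have "x = P *v x" by (simp add: Qv)
    then have xR: "x \<in> R" using PR by metis
    have "orthogonal x x"
    proof (rule orthogonal_to_span[of x "range ((*v) M)"])
      show "x \<in> span (range ((*v) M))" using xR R_def by simp
      fix y assume "y \<in> range ((*v) M)"
      then obtain z where "y = M *v z" by blast
      then show "orthogonal x y" using sym_dot[OF sym, of x z] Mx
        by (simp add: orthogonal_def)
    qed
    then show ?thesis by (simp add: orthogonal_def)
  qed
  obtain Y where YL: "Y ** (M + Q) = mat 1"
    using matrix_left_invertible_ker[of "M + Q"] d by blast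
  then have YR: "(M + Q) ** Y = mat 1" using matrix_left_right_inverse by blast
  have YRv: "(M + Q) *v (Y *v z) = z" for z
    using YR by (simp add: matrix_vector_mul_assoc)
  have YLv: "Y *v ((M + Q) *v z) = z" for z
    using YL by (simp add: matrix_vector_mul_assoc)
  have QY: "Q *v (Y *v z) = Q *v z" for z
  proof -
    have "Q *v z = Q *v ((M + Q) *v (Y *v z))" using YRv by simp
    also have "\<dots> = Q *v (Y *v z)"
      by (simp add: matrix_vector_mult_add_rdistrib matrix_vector_right_distrib b c)
    finally show ?thesis by simp
  qed
  have YQ: "Y *v (Q *v z) = Q *v z" for z
  proof -
    have "(M + Q) *v (Q *v z) = Q *v z"
      by (simp add: matrix_vector_mult_add_rdistrib a c)
    then show ?thesis using YLv by metis
  qed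
  have YM: "Y *v (M *v z) = z - Q *v z" for z
    using YLv[of z] YQ[of z]
    by (simp add: matrix_vector_mult_add_rdistrib matrix_vector_right_distrib eq_diff_eq)
  have MY: "M *v (Y *v z) = z - Q *v z" for z
    using YRv[of z] QY[of z]
    by (simp add: matrix_vector_mult_add_rdistrib eq_diff_eq)
  define X where "X = Y - Q"
  have Xv: "X *v z = Y *v z - Q *v z" for z
    unfolding X_def by (simp add: matrix_vector_mult_diff_rdistrib)
  have MX: "(M ** X) *v z = z - Q *v z" for z
    by (simp add: matrix_vector_mul_assoc[symmetric] Xv matrix_vector_mult_diff_distrib MY a)
  have XM: "(X ** M) *v z = z - Q *v z" for z
    by (simp add: matrix_vector_mul_assoc[symmetric] Xv YM b)
  have QX: "Q *v (X *v z) = 0" for z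
    by (simp add: Xv matrix_vector_mult_diff_distrib QY c)
  have p1: "M ** X ** M = M"
    by (simp add: matrix_eq matrix_vector_mul_assoc[symmetric] MX[unfolded matrix_vector_mul_assoc[symmetric]] b)
  have p2: "X ** M ** X = X"
    by (simp add: matrix_eq matrix_vector_mul_assoc[symmetric] XM[unfolded matrix_vector_mul_assoc[symmetric]] QX)
  have p3: "transpose (M ** X) = M ** X"
    by (rule sym_by_dot) (simp add: MX inner_diff_left inner_diff_right Qsym)
  have p4: "transpose (X ** M) = X ** M"
    by (rule sym_by_dot) (simp add: XM inner_diff_left inner_diff_right Qsym)
  have p5: "M *v (X *v b) = b" if hb: "\<forall>k. M *v k = 0 \<longrightarrow> b \<bullet> k = 0" for b
  proof -
    have "b \<bullet> (Q *v b) = 0" using hb a by blast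
    moreover have "(Q *v b) \<bullet> (Q *v b) = b \<bullet> (Q *v b)" using Qsym[of b "Q *v b"] c by simp
    ultimately have "Q *v b = 0" by simp
    then show ?thesis using MX[of b] by (simp add: matrix_vector_mul_assoc)
  qed
  show ?thesis using p1 p2 p3 p4 p5 unfolding is_pinv_def by blast
qed

lemma rayleigh:
  fixes M :: "real^'n^'n"
  assumes sym: "transpose M = M"
  shows "\<exists>L. L \<in> eigenvalues M \<and> (\<forall>x. x \<bullet> (M *v x) \<le> L * (x \<bullet> x))"
proof -
  define S :: "(real^'n) set" where "S = sphere 0 1"
  have ne: "S \<noteq> {}" unfolding S_def
    by (metis mem_sphere_0 norm_axis_1 empty_iff)
  have cont: "continuous_on S (\<lambda>x. x \<bullet> (M *v x))"
    by (intro continuous_intros)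
  obtain v where vS: "v \<in> S" and vmax: "\<And>y. y \<in> S \<Longrightarrow> y \<bullet> (M *v y) \<le> v \<bullet> (M *v v)"
    using continuous_attains_sup[OF _ ne cont] compact_sphere S_def by blast
  define L where "L = v \<bullet> (M *v v)"
  have vv: "v \<bullet> v = 1" using vS S_def by (simp add: dot_square_norm)
  have bound: "x \<bullet> (M *v x) \<le> L * (x \<bullet> x)" for x
  proof (cases "x = 0")
    case True then show ?thesis by simp
  next
    case False
    define y where "y = (1 / norm x) *\<^sub>R x"
    have "y \<in> S" using False unfolding S_def y_def by simp
    then have "y \<bullet> (M *v y) \<le> L" using vmax L_def by simp
    moreover have "y \<bullet> (M *v y) = (x \<bullet> (M *v x)) / (norm x)^2"
      unfolding y_def by (simp add: matrix_vector_mult_scaleR power2_eq_square)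
    ultimately have "x \<bullet> (M *v x) / (norm x)^2 \<le> L" by simp
    moreover have "(norm x)^2 > 0" using False by simp
    ultimately show ?thesis by (simp add: divide_le_eq dot_square_norm mult.commute)
  qed
  define g where "g x = L * (x \<bullet> x) - x \<bullet> (M *v x)" for x
  have g0: "g x \<ge> 0" for x using bound[of x] g_def by simp
  define w where "w = L *\<^sub>R v - M *v v"
  have gv: "g v = 0" unfolding g_def L_def using vv by simp
  have expand: "g (v - t *\<^sub>R w) = g v - 2 * t * (w \<bullet> w) + t^2 * g w" for t
  proof -
    have s: "v \<bullet> (M *v w) = w \<bullet> (M *v v)" using sym_dot[OF sym, of v w] by (simp add: inner_commute)
    have hww: "w \<bullet> w = L * (v \<bullet> w) - w \<bullet> (M *v v)" unfolding w_def
      by (simp add: inner_diff_left inner_commute)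
    have e1: "(v - t *\<^sub>R w) \<bullet> (v - t *\<^sub>R w) = v \<bullet> v - 2 * t * (v \<bullet> w) + t^2 * (w \<bullet> w)"
      by (simp add: inner_diff_left inner_diff_right inner_commute[of w v] power2_eq_square algebra_simps)
    have e2: "(v - t *\<^sub>R w) \<bullet> (M *v (v - t *\<^sub>R w)) = v \<bullet> (M *v v) - 2 * t * (w \<bullet> (M *v v)) + t^2 * (w \<bullet> (M *v w))"
      by (simp add: inner_diff_left inner_diff_right matrix_vector_mult_diff_distrib
          matrix_vector_mult_scaleR s power2_eq_square algebra_simps)
    show ?thesis unfolding g_def e1 e2 hww by (simp add: algebra_simps power2_eq_square)
  qed
  have "w \<bullet> w = 0"
  proof (rule ccontr)
    assume "w \<bullet> w \<noteq> 0"
    then have a: "w \<bullet> w > 0" by (simp add: order_le_neq_trans)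
    define c where "c = g w"
    have c0: "c \<ge> 0" using g0 c_def by simp
    define t where "t = (w \<bullet> w) / (c + 1)"
    have t0: "t > 0" using a c0 t_def by simp
    have "0 \<le> - 2 * t * (w \<bullet> w) + t^2 * c" using g0[of "v - t *\<^sub>R w"] expand[of t] gv c_def by simp
    then have "0 \<le> t * (- 2 * (w \<bullet> w) + t * c)" by (simp add: power2_eq_square algebra_simps)
    then have "0 \<le> - 2 * (w \<bullet> w) + t * c" using t0 by (simp add: zero_le_mult_iff)
    moreover have "t * c < w \<bullet> w" unfolding t_def using a c0
      by (simp add: divide_less_eq mult_strict_left_mono)
    ultimately show False using a by linarith
  qed
  then have "w = 0" by simp
  then have "M *v v = L *\<^sub>R v" unfolding w_def by simp
  moreover have "v \<noteq> 0" using vv by auto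
  ultimately have "L \<in> eigenvalues M" unfolding eigenvalues_def by blast
  then show ?thesis using bound by blast
qed

lemma eig_finite:
  fixes M :: "real^'n^'n"
  assumes sym: "transpose M = M"
  shows "finite (eigenvalues M)"
proof -
  define ev where "ev \<mu> = (SOME u. u \<noteq> 0 \<and> M *v u = \<mu> *\<^sub>R u)" for \<mu>
  have evp: "ev \<mu> \<noteq> 0 \<and> M *v ev \<mu> = \<mu> *\<^sub>R ev \<mu>" if "\<mu> \<in> eigenvalues M" for \<mu>
    using that unfolding eigenvalues_def ev_def by (metis (mono_tags, lifting) mem_Collect_eq someI_ex)
  have inj: "inj_on ev (eigenvalues M)"
  proof (rule inj_onI)
    fix a b assume a: "a \<in> eigenvalues M" and b: "b \<in> eigenvalues M" and e: "ev a = ev b"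
    have "a *\<^sub>R ev a = b *\<^sub>R ev a" using evp[OF a] evp[OF b] e by metis
    then show "a = b" using evp[OF a] by (simp add: scaleR_cancel_right)
  qed
  have orth: "pairwise orthogonal (ev ` eigenvalues M)"
  proof (rule pairwiseI, clarify)
    fix a b assume a: "a \<in> eigenvalues M" and b: "b \<in> eigenvalues M" and ne: "ev a \<noteq> ev b"
    then have "a \<noteq> b" by auto
    have "(M *v ev a) \<bullet> ev b = ev a \<bullet> (M *v ev b)" using sym_dot[OF sym] by blast
    moreover have "M *v ev a = a *\<^sub>R ev a" "M *v ev b = b *\<^sub>R ev b" using evp[OF a] evp[OF b] by auto
    ultimately have "a * (ev a \<bullet> ev b) = b * (ev a \<bullet> ev b)" by simp
    then have "ev a \<bullet> ev b = 0" using \<open>a \<noteq> b\<close> by simp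
    then show "orthogonal (ev a) (ev b)" by (simp add: orthogonal_def)
  qed
  have "0 \<notin> ev ` eigenvalues M" using evp by auto
  then have "independent (ev ` eigenvalues M)" using pairwise_orthogonal_independent orth by blast
  then have "finite (ev ` eigenvalues M)" using independent_imp_finite by blast
  then show ?thesis using finite_imageD inj by blast
qed


theorem lemma4p8:
  fixes A :: "real^'n^'m" and c :: "real^'m"
  assumes "(norm (transpose A *v c))\<^sup>2 \<in> \<int>"
    and "transpose A *v c \<noteq> 0"
  shows "(norm (proj_img A *v c))\<^sup>2 \<ge> 1 / (sigma_max A)\<^sup>2
         \<and> 1 / (sigma_max A)\<^sup>2 = 1 / lambda_max (transpose A ** A)"
proof -
  define M where "M = transpose A ** A"
  have sym: "transpose M = M" unfolding M_def by (simp add: matrix_transpose_mul)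
  have Mv: "M *v x = transpose A *v (A *v x)" for x
    unfolding M_def by (simp add: matrix_vector_mul_assoc)
  have quad: "x \<bullet> (M *v x) = (A *v x) \<bullet> (A *v x)" for x
    using adj_dot[of A "A *v x" x] by (simp add: Mv inner_commute)
  obtain L where LE: "L \<in> eigenvalues M" and bound: "\<And>x. x \<bullet> (M *v x) \<le> L * (x \<bullet> x)"
    using rayleigh[OF sym] by blast
  have finE: "finite (eigenvalues M)" using eig_finite[OF sym] .
  have eigb: "0 \<le> \<mu> \<and> \<mu> \<le> L" if "\<mu> \<in> eigenvalues M" for \<mu>
  proof -
    from that obtain u where u: "u \<noteq> 0" "M *v u = \<mu> *\<^sub>R u" unfolding eigenvalues_def mem_Collect_eq by (elim exE conjE)
    have uu: "u \<bullet> u > 0" using u(1) by simp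
    have e: "u \<bullet> (M *v u) = \<mu> * (u \<bullet> u)" unfolding u(2) by (rule inner_scaleR_right)
    have "0 \<le> u \<bullet> (M *v u)" unfolding quad by (rule inner_ge_zero)
    then have "0 \<le> \<mu> * (u \<bullet> u)" using e by linarith
    then have "0 \<le> \<mu>" using uu by (simp add: zero_le_mult_iff)
    moreover have "\<mu> * (u \<bullet> u) \<le> L * (u \<bullet> u)" using e bound[of u] by linarith
    then have "\<mu> \<le> L" using uu by (meson mult_le_cancel_right_pos)
    ultimately show ?thesis by simp
  qed
  have L0: "L \<ge> 0" using eigb[OF LE] by simp
  have lm: "lambda_max M = L"
    unfolding lambda_max_def by (rule Max_eqI[OF finE]) (use eigb LE in auto)
  have sm: "sigma_max A = sqrt L"
    unfolding sigma_max_def singular_values_def M_def[symmetric]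
    by (rule Max_eqI) (use finE eigb LE in auto)
  have sig2: "(sigma_max A)\<^sup>2 = L" using sm L0 by simp
  obtain X0 where X0: "is_pinv M X0"
    and X0b: "\<And>b. (\<forall>k. M *v k = 0 \<longrightarrow> b \<bullet> k = 0) \<Longrightarrow> M *v (X0 *v b) = b"
    using pinv_exists[OF sym] by blast
  have pX: "pinv M = X0" unfolding pinv_def
    by (rule the_equality[of "is_pinv M" X0]) (auto intro: X0 dest: pinv_unique[OF _ X0])
  define b where "b = transpose A *v c"
  have hb: "\<forall>k. M *v k = 0 \<longrightarrow> b \<bullet> k = 0"
  proof (intro allI impI)
    fix k assume "M *v k = 0"
    then have "(A *v k) \<bullet> (A *v k) = 0" using quad[of k] by simp
    then have "A *v k = 0" by simp
    then show "b \<bullet> k = 0" unfolding b_def using adj_dot[of A c k] by simp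
  qed
  define y where "y = X0 *v b"
  have My: "M *v y = b" unfolding y_def using X0b hb by blast
  have Pc: "proj_img A *v c = A *v y"
    unfolding proj_img_def y_def b_def M_def[symmetric] pX
    by (metis matrix_vector_mul_assoc)
  define p where "p = (A *v y) \<bullet> (A *v y)"
  define q where "q = b \<bullet> b"
  have p0: "p \<ge> 0" unfolding p_def by simp
  have q0: "q > 0" unfolding q_def b_def using assms(2) by simp
  have qeq: "q = (A *v y) \<bullet> (A *v b)"
    unfolding q_def using adj_dot[of A "A *v y" b] My by (simp add: Mv)
  have "q \<le> norm (A *v y) * norm (A *v b)" using qeq norm_cauchy_schwarz by simp
  then have "q^2 \<le> (norm (A *v y) * norm (A *v b))^2" using q0 by (intro power_mono) auto
  also have "\<dots> = p * ((A *v b) \<bullet> (A *v b))"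
    by (simp add: p_def power_mult_distrib power2_norm_eq_inner)
  also have "\<dots> \<le> p * (L * q)"
    using bound[of b] quad[of b] p0 unfolding q_def by (simp add: mult_left_mono)
  finally have "q * q \<le> (p * L) * q" by (simp add: power2_eq_square algebra_simps)
  then have qpL: "q \<le> p * L" using q0 by simp
  have q1: "q \<ge> 1"
  proof -
    have "q = (norm (transpose A *v c))\<^sup>2" unfolding q_def b_def by (simp add: power2_norm_eq_inner)
    then have "q \<in> \<int>" using assms(1) by simp
    then obtain n where n: "q = of_int n" by (metis Ints_cases)
    then have "n > 0" using q0 by simp
    then show ?thesis using n by simp
  qed
  have Lp: "1 \<le> p * L" using q1 qpL by simp
  then have Lpos: "L > 0" using L0 p0 by (cases "L = 0") auto
  have "1 / L \<le> p" using Lp Lpos by (simp add: divide_le_eq mult.commute)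
  moreover have "p = (norm (proj_img A *v c))\<^sup>2" unfolding p_def Pc by (simp add: power2_norm_eq_inner)
  ultimately show ?thesis using sig2 lm M_def by simp
qed

end
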